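(* Let $k\ge2$ be a constant integer. There is a constant $C>0$ such that, with probability $1-o(1)$ as $n\to\infty$, the random $k$-tree $G(n)$ has the following property: for every path $u_hu_{h-1}\cdots u_0$ in $G(n)$ such that $u_i$ is born strictly later than $u_{i-1}$ for all $1\le i\le h$, we have $h\le C\log n$.
   Context: Random $k$-tree process: $G(0)$ is a clique on $k$ vertices (its vertices are born in round $0$); for $t\ge1$, $G(t)$ is obtained from $G(t-1)$ by choosing a $k$-clique of $G(t-1)$ uniformly at random, creating a new vertex (born in round $t$), and joining it to all vertices of the chosen clique. *)

theory Defs
  imports "HOL-Probability.Probability"
begin

text \<open>The initial clique consists of vertices 0,...,k-1
  (born in round 0); the vertex created in round t (t \<ge> 1) is k + t - 1.
  So G(t) has vertex set {0..<k+t}. A graph is represented by its edge set,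
  a set of 2-element sets of vertices.\<close>

definition kcliques :: "nat \<Rightarrow> nat set \<Rightarrow> nat set set \<Rightarrow> nat set set" where
  "kcliques k V E = {S. S \<subseteq> V \<and> card S = k \<and> (\<forall>x\<in>S. \<forall>y\<in>S. x \<noteq> y \<longrightarrow> {x, y} \<in> E)}"

definition birth :: "nat \<Rightarrow> nat \<Rightarrow> nat" where
  "birth k v = (if v < k then 0 else v - k + 1)"

definition init_edges :: "nat \<Rightarrow> nat set set" where
  "init_edges k = {{x, y} | x y. x < k \<and> y < k \<and> x \<noteq> y}"

fun ktree :: "nat \<Rightarrow> nat \<Rightarrow> nat set set pmf" where
  "ktree k 0 = return_pmf (init_edges k)"
| "ktree k (Suc t) = bind_pmf (ktree k t) (\<lambda>E.
     map_pmf (\<lambda>S. E \<union> {{k + t, s} | s. s \<in> S})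
       (pmf_of_set (kcliques k {0..<k + t} E)))"

text \<open>A path u_h u_{h-1} ... u_0 is given as the list [u_0, ..., u_h];
  its length h is length ps - 1. Birth times strictly increase from u_0 to u_h.\<close>
definition increasing_path :: "nat \<Rightarrow> nat \<Rightarrow> nat set set \<Rightarrow> nat list \<Rightarrow> bool" where
  "increasing_path k t E ps \<longleftrightarrow> ps \<noteq> [] \<and> distinct ps \<and> set ps \<subseteq> {0..<k + t} \<and>
     (\<forall>i. Suc i < length ps \<longrightarrow> {ps ! i, ps ! Suc i} \<in> E \<and>
                                 birth k (ps ! i) < birth k (ps ! Suc i))"

end

theory Submission imports Defs "HOL-Analysis.Harmonic_Numbers" begin

lemma path_len:
  assumes "increasing_path k t E ps" shows "length ps \<le> k + t"
proof -
  have "length ps = card (set ps)" using assms by (simp add: increasing_path_def distinct_card)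
  also have "\<dots> \<le> card {0..<k+t}" using assms by (intro card_mono) (auto simp: increasing_path_def)
  finally show ?thesis by simp
qed

lemma path_single: "v < k + t \<Longrightarrow> increasing_path k t E [v]"
  by (simp add: increasing_path_def)

lemma birth_mono:
  assumes "increasing_path k t E ps" "i < j" "j < length ps"
  shows "birth k (ps ! i) < birth k (ps ! j)"
  using assms(2,3)
proof (induction j)
  case 0 then show ?case by simp
next
  case (Suc j)
  have s: "birth k (ps ! j) < birth k (ps ! Suc j)" using assms(1) Suc.prems by (auto simp: increasing_path_def)
  show ?case
  proof (cases "i = j")
    case True then show ?thesis using s by simp
  next
    case False then show ?thesis using Suc s by auto
  qed
qed

lemma birth_le: "v < k + t \<Longrightarrow> birth k v \<le> t"
  by (auto simp: birth_def)

lemma birth_new: "birth k (k + t) = Suc t"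
  by (simp add: birth_def)

lemma path_snoc:
  assumes "qs \<noteq> []"
  shows "increasing_path k t E (qs @ [w]) \<longleftrightarrow> increasing_path k t E qs \<and> w \<notin> set qs \<and> w < k + t
     \<and> {last qs, w} \<in> E \<and> birth k (last qs) < birth k w"
proof -
  have lq: "last qs = qs ! (length qs - 1)" using assms by (simp add: last_conv_nth)
  show ?thesis
  proof
    assume H: "increasing_path k t E (qs @ [w])"
    have A: "\<And>i. Suc i < Suc (length qs) \<Longrightarrow> {(qs@[w]) ! i, (qs@[w]) ! Suc i} \<in> E \<and> birth k ((qs@[w]) ! i) < birth k ((qs@[w]) ! Suc i)"
      using H by (auto simp: increasing_path_def)
    have B: "\<forall>i. Suc i < length qs \<longrightarrow> {qs ! i, qs ! Suc i} \<in> E \<and> birth k (qs ! i) < birth k (qs ! Suc i)"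
    proof (intro allI impI)
      fix i assume "Suc i < length qs"
      then show "{qs ! i, qs ! Suc i} \<in> E \<and> birth k (qs ! i) < birth k (qs ! Suc i)"
        using A[of i] by (simp add: nth_append)
    qed
    have C: "{last qs, w} \<in> E \<and> birth k (last qs) < birth k w"
      using A[of "length qs - 1"] assms lq by (simp add: nth_append)
    show "increasing_path k t E qs \<and> w \<notin> set qs \<and> w < k + t
     \<and> {last qs, w} \<in> E \<and> birth k (last qs) < birth k w"
      using H B C assms by (auto simp: increasing_path_def)
  next
    assume H: "increasing_path k t E qs \<and> w \<notin> set qs \<and> w < k + t
     \<and> {last qs, w} \<in> E \<and> birth k (last qs) < birth k w"
    have "\<forall>i. Suc i < length (qs @ [w]) \<longrightarrow> {(qs@[w]) ! i, (qs@[w]) ! Suc i} \<in> E \<and> birth k ((qs@[w]) ! i) < birth k ((qs@[w]) ! Suc i)"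
    proof (intro allI impI)
      fix i assume i: "Suc i < length (qs @ [w])"
      show "{(qs@[w]) ! i, (qs@[w]) ! Suc i} \<in> E \<and> birth k ((qs@[w]) ! i) < birth k ((qs@[w]) ! Suc i)"
      proof (cases "Suc i < length qs")
        case True then show ?thesis using H by (simp add: nth_append increasing_path_def)
      next
        case False
        then have "i = length qs - 1" using i by simp
        then show ?thesis using H lq assms by (simp add: nth_append)
      qed
    qed
    then show "increasing_path k t E (qs @ [w])" using H by (auto simp: increasing_path_def)
  qed
qed

definition ext :: "nat \<Rightarrow> nat \<Rightarrow> nat set set \<Rightarrow> nat set \<Rightarrow> nat set set" where
  "ext k t E S = E \<union> {{k + t, s} | s. s \<in> S}"

definition edges_ok :: "nat \<Rightarrow> nat \<Rightarrow> nat set set \<Rightarrow> bool" where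
  "edges_ok k t E \<longleftrightarrow> (\<forall>e\<in>E. \<exists>x y. e = {x, y} \<and> x < k + t \<and> y < k + t \<and> x \<noteq> y)"

lemma path_old_new: "increasing_path k t E ps \<Longrightarrow> increasing_path k (Suc t) (ext k t E S) ps"
  unfolding increasing_path_def ext_def by auto

lemma path_new_old:
  assumes "increasing_path k (Suc t) (ext k t E S) ps" "k + t \<notin> set ps"
  shows "increasing_path k t E ps"
proof -
  have s: "set ps \<subseteq> {0..<k+t}"
  proof
    fix x assume x: "x \<in> set ps"
    then have "x \<in> {0..<k + Suc t}" using assms(1) by (auto simp: increasing_path_def)
    then show "x \<in> {0..<k+t}" using x assms(2) by (cases "x = k + t") auto
  qed
  have "\<forall>i. Suc i < length ps \<longrightarrow> {ps ! i, ps ! Suc i} \<in> E \<and> birth k (ps ! i) < birth k (ps ! Suc i)"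
  proof (intro allI impI)
    fix i assume i: "Suc i < length ps"
    have m: "ps ! i \<in> set ps" "ps ! Suc i \<in> set ps" using i by auto
    have "{ps ! i, ps ! Suc i} \<in> ext k t E S" "birth k (ps ! i) < birth k (ps ! Suc i)"
      using assms(1) i by (auto simp: increasing_path_def)
    moreover have "{ps ! i, ps ! Suc i} \<notin> {{k + t, s} | s. s \<in> S}"
    proof
      assume "{ps ! i, ps ! Suc i} \<in> {{k + t, s} | s. s \<in> S}"
      then obtain s where "{ps ! i, ps ! Suc i} = {k + t, s}" by auto
      then have "k + t \<in> {ps ! i, ps ! Suc i}" by auto
      then show False using m assms(2) by auto
    qed
    ultimately show "{ps ! i, ps ! Suc i} \<in> E \<and> birth k (ps ! i) < birth k (ps ! Suc i)"
      by (auto simp: ext_def)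
  qed
  then show ?thesis using assms s by (auto simp: increasing_path_def)
qed

lemma new_notin:
  assumes "increasing_path k (Suc t) E' ps" "last ps < k + t"
  shows "k + t \<notin> set ps"
proof
  assume "k + t \<in> set ps"
  then obtain i where i: "i < length ps" "ps ! i = k + t" by (auto simp: in_set_conv_nth)
  have ne: "ps \<noteq> []" using i by auto
  have l: "last ps = ps ! (length ps - 1)" using ne by (simp add: last_conv_nth)
  show False
  proof (cases "i = length ps - 1")
    case True then show ?thesis using i l assms(2) by simp
  next
    case False
    then have "birth k (ps ! i) < birth k (ps ! (length ps - 1))"
      using i by (intro birth_mono[OF assms(1)]) auto
    then show False using i l assms(2) birth_le[of "last ps" k t] birth_new[of k t] by simp
  qed
qed

lemma cliques_ext:
  assumes S: "S \<in> kcliques k {0..<k+t} E" and ok: "edges_ok k t E" and kpos: "k \<ge> 1"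
  shows "kcliques k {0..<k + Suc t} (ext k t E S) =
     kcliques k {0..<k+t} E \<union> insert (k+t) ` {T. T \<subseteq> S \<and> card T = k - 1}"
proof (intro equalityI subsetI)
  fix S' assume H: "S' \<in> kcliques k {0..<k + Suc t} (ext k t E S)"
  have Ssub: "S \<subseteq> {0..<k+t}" using S by (simp add: kcliques_def)
  show "S' \<in> kcliques k {0..<k+t} E \<union> insert (k+t) ` {T. T \<subseteq> S \<and> card T = k - 1}"
  proof (cases "k + t \<in> S'")
    case True
    define T where "T = S' - {k+t}"
    have fin: "finite S'" using H by (auto simp: kcliques_def intro: finite_subset)
    have ct: "card T = k - 1" using H True fin by (simp add: T_def kcliques_def)
    have "T \<subseteq> S"
    proof
      fix y assume y: "y \<in> T"
      then have yS': "y \<in> S'" "y \<noteq> k + t" by (auto simp: T_def)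
      then have e: "{k+t, y} \<in> ext k t E S" using H True by (auto simp: kcliques_def)
      have "{k+t, y} \<notin> E"
      proof
        assume "{k+t, y} \<in> E"
        then obtain a b where "{k+t,y} = {a,b}" "a < k+t" "b < k+t" using ok by (auto simp: edges_ok_def)
        then show False by (auto simp: doubleton_eq_iff)
      qed
      then obtain s where "s \<in> S" "{k+t, y} = {k+t, s}" using e by (auto simp: ext_def)
      then show "y \<in> S" by (auto simp: doubleton_eq_iff)
    qed
    moreover have "S' = insert (k+t) T" using True by (auto simp: T_def)
    ultimately show ?thesis using ct by auto
  next
    case False
    have "S' \<in> kcliques k {0..<k+t} E"
      unfolding kcliques_def
    proof (intro CollectI conjI ballI impI)
      show "S' \<subseteq> {0..<k+t}"
      proof
        fix x assume x: "x \<in> S'"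
        then have "x \<in> {0..<k + Suc t}" using H by (auto simp: kcliques_def)
        then show "x \<in> {0..<k+t}" using x False by (cases "x = k + t") auto
      qed
      show "card S' = k" using H by (auto simp: kcliques_def)
      fix x y assume xy: "x \<in> S'" "y \<in> S'" "x \<noteq> y"
      then have e: "{x, y} \<in> ext k t E S" using H by (auto simp: kcliques_def)
      show "{x, y} \<in> E"
      proof (rule ccontr)
        assume "{x, y} \<notin> E"
        then obtain s where "{x,y} = {k+t, s}" using e by (auto simp: ext_def)
        then have "k + t \<in> {x, y}" by auto
        then show False using xy False by auto
      qed
    qed
    then show ?thesis by simp
  qed
next
  fix S' assume H: "S' \<in> kcliques k {0..<k+t} E \<union> insert (k+t) ` {T. T \<subseteq> S \<and> card T = k - 1}"
  have Ssub: "S \<subseteq> {0..<k+t}" and cS: "card S = k" using S by (auto simp: kcliques_def)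
  show "S' \<in> kcliques k {0..<k + Suc t} (ext k t E S)"
  proof (cases "S' \<in> kcliques k {0..<k+t} E")
    case True
    have a: "S' \<subseteq> {0..<k+t}" "card S' = k" "\<And>x y. x\<in>S' \<Longrightarrow> y\<in>S' \<Longrightarrow> x\<noteq>y \<Longrightarrow> {x,y}\<in>E"
      using True by (simp_all add: kcliques_def)
    show ?thesis unfolding kcliques_def
    proof (intro CollectI conjI ballI impI)
      show "S' \<subseteq> {0..<k + Suc t}" using a(1) by fastforce
      show "card S' = k" by (rule a(2))
      fix x y assume "x\<in>S'" "y\<in>S'" "x\<noteq>y"
      then have "{x,y} \<in> E" by (rule a(3))
      then show "{x,y} \<in> ext k t E S" unfolding ext_def by (rule UnI1)
    qed
  next
    case False
    from H False have "S' \<in> insert (k+t) ` {T. T \<subseteq> S \<and> card T = k - 1}" by (meson UnE)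
    then obtain T where T0: "T \<in> {T. T \<subseteq> S \<and> card T = k - 1}" "S' = insert (k+t) T" by (rule imageE)
    then have T: "T \<subseteq> S" "card T = k - 1" "S' = insert (k+t) T" by simp_all
    have fT: "finite T" by (meson T(1) Ssub finite_atLeastLessThan finite_subset)
    have nT: "k + t \<notin> T" using T(1) Ssub by fastforce
    show ?thesis
      unfolding kcliques_def
    proof (intro CollectI conjI ballI impI)
      show "S' \<subseteq> {0..<k + Suc t}" using T Ssub by auto
      show "card S' = k" using T fT nT kpos by simp
      fix x y assume xy: "x \<in> S'" "y \<in> S'" "x \<noteq> y"
      show "{x, y} \<in> ext k t E S"
      proof (cases "x = k + t \<or> y = k + t")
        case True
        show ?thesis
        proof (cases "x = k + t")
          case True
          then have "y \<in> S" using xy T by auto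
          then have "{x, y} \<in> {{k + t, s} | s. s \<in> S}" using True by blast
          then show ?thesis unfolding ext_def by (rule UnI2)
        next
          case False
          then have "y = k + t" "x \<in> S" using xy T \<open>x = k + t \<or> y = k + t\<close> by auto
          then have "{x, y} = {k + t, x}" "x \<in> S" by (auto simp: insert_commute)
          then have "{x, y} \<in> {{k + t, s} | s. s \<in> S}" by blast
          then show ?thesis unfolding ext_def by (rule UnI2)
        qed
      next
        case False
        then have "x \<in> S" "y \<in> S" using xy T by auto
        then have "{x,y} \<in> E" using S xy by (simp add: kcliques_def)
        then show ?thesis unfolding ext_def by (rule UnI1)
      qed
    qed
  qed
qed

definition ipaths :: "nat \<Rightarrow> nat \<Rightarrow> nat set set \<Rightarrow> nat set \<Rightarrow> nat set" where
  "ipaths k t E S = {length ps - 1 | ps. increasing_path k t E ps \<and> last ps \<in> S}"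

definition mval :: "nat \<Rightarrow> nat \<Rightarrow> nat set set \<Rightarrow> nat set \<Rightarrow> nat" where
  "mval k t E S = Max (insert 0 (ipaths k t E S))"

lemma ipaths_sub: "ipaths k t E S \<subseteq> {..k+t}"
proof
  fix x assume "x \<in> ipaths k t E S"
  then obtain ps where "x = length ps - 1" "increasing_path k t E ps" unfolding ipaths_def by blast
  then show "x \<in> {..k+t}" using path_len[of k t E ps] by simp
qed

lemma ipaths_fin: "finite (ipaths k t E S)"
  by (rule finite_subset[OF ipaths_sub]) simp

lemma mval_ge: "x \<in> ipaths k t E S \<Longrightarrow> x \<le> mval k t E S"
  unfolding mval_def using ipaths_fin by (intro Max_ge) auto

lemma mval_bound: "mval k t E S \<le> k + t"
proof -
  have "\<forall>x\<in>insert 0 (ipaths k t E S). x \<le> k + t" using ipaths_sub[of k t E S] by (auto simp: subset_iff)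
  then show ?thesis unfolding mval_def using ipaths_fin by (subst Max_le_iff) auto
qed

lemma mval_in:
  assumes "v \<in> S" "v < k + t" shows "mval k t E S \<in> ipaths k t E S"
proof -
  have "0 \<in> ipaths k t E S"
    unfolding ipaths_def using path_single[OF assms(2), of E] assms(1)
    by (intro CollectI exI[of _ "[v]"]) simp
  then have "insert 0 (ipaths k t E S) = ipaths k t E S" by auto
  moreover have "Max (ipaths k t E S) \<in> ipaths k t E S"
    using ipaths_fin \<open>0 \<in> _\<close> by (intro Max_in) auto
  ultimately show ?thesis unfolding mval_def by simp
qed

lemma ipaths_old:
  assumes "S0 \<subseteq> {0..<k+t}"
  shows "ipaths k (Suc t) (ext k t E S) S0 = ipaths k t E S0"
proof (intro equalityI subsetI)
  fix x assume "x \<in> ipaths k (Suc t) (ext k t E S) S0"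
  then obtain ps where ps: "x = length ps - 1" "increasing_path k (Suc t) (ext k t E S) ps" "last ps \<in> S0"
    unfolding ipaths_def by blast
  have "last ps < k + t" using ps(3) assms by auto
  then have "k + t \<notin> set ps" using new_notin[OF ps(2)] by blast
  then have "increasing_path k t E ps" using path_new_old ps(2) by blast
  then show "x \<in> ipaths k t E S0" using ps unfolding ipaths_def by blast
next
  fix x assume "x \<in> ipaths k t E S0"
  then obtain ps where ps: "x = length ps - 1" "increasing_path k t E ps" "last ps \<in> S0"
    unfolding ipaths_def by blast
  then show "x \<in> ipaths k (Suc t) (ext k t E S) S0" using path_old_new[OF ps(2)] unfolding ipaths_def by blast
qed

lemma mval_old:
  "S0 \<subseteq> {0..<k+t} \<Longrightarrow> mval k (Suc t) (ext k t E S) S0 = mval k t E S0"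
  unfolding mval_def using ipaths_old by simp

lemma mval_new:
  assumes ok: "edges_ok k t E" and Ssub: "S \<subseteq> {0..<k+t}" and v: "v \<in> S" and T: "T \<subseteq> S"
  shows "mval k (Suc t) (ext k t E S) (insert (k+t) T) = Suc (mval k t E S)"
proof (rule antisym)
  let ?E' = "ext k t E S"
  define m where "m = mval k t E S"
  have "\<forall>x\<in>insert 0 (ipaths k (Suc t) ?E' (insert (k+t) T)). x \<le> Suc m"
  proof
    fix x assume "x \<in> insert 0 (ipaths k (Suc t) ?E' (insert (k+t) T))"
    then consider "x = 0" | ps where "x = length ps - 1" "increasing_path k (Suc t) ?E' ps" "last ps \<in> insert (k+t) T"
      unfolding ipaths_def by auto
    then show "x \<le> Suc m"
    proof cases
      case 1 then show ?thesis by simp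
    next
      case (2 ps)
      show ?thesis
      proof (cases "last ps = k + t")
        case False
        then have lT: "last ps \<in> T" using 2 by auto
        then have "last ps \<in> {0..<k+t}" using T Ssub by (meson subsetD)
        then have "last ps < k + t" by simp
        then have "k + t \<notin> set ps" using new_notin[OF 2(2)] by blast
        then have "increasing_path k t E ps" using path_new_old 2(2) by blast
        then have "x \<in> ipaths k t E S" using 2 lT T unfolding ipaths_def by blast
        then have "x \<le> m" unfolding m_def by (rule mval_ge)
        then show ?thesis by simp
      next
        case True
        have ne: "ps \<noteq> []" using 2(2) by (simp add: increasing_path_def)
        define qs where "qs = butlast ps"
        have psq: "ps = qs @ [k+t]" using ne True by (metis append_butlast_last_id qs_def)
        show ?thesis
        proof (cases "qs = []")
          case True then show ?thesis using 2(1) psq by simp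
        next
          case False
          have H: "increasing_path k (Suc t) ?E' qs" "k + t \<notin> set qs" "{last qs, k+t} \<in> ?E'"
            using 2(2) path_snoc[OF False, of k "Suc t" ?E' "k+t"] psq by auto
          have qo: "increasing_path k t E qs" using path_new_old H by blast
          have lq: "last qs \<in> set qs" using False by simp
          have "{last qs, k+t} \<notin> E"
          proof
            assume "{last qs, k+t} \<in> E"
            then obtain a b where "{last qs, k+t} = {a,b}" "a < k+t" "b < k+t" using ok by (auto simp: edges_ok_def)
            then show False by (auto simp: doubleton_eq_iff)
          qed
          then obtain s where s: "s \<in> S" "{last qs, k+t} = {k+t, s}" using H(3) by (auto simp: ext_def)
          have "last qs \<noteq> k + t" using lq H(2) by auto
          then have "last qs = s" using s(2) by (auto simp: doubleton_eq_iff)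
          then have "length qs - 1 \<in> ipaths k t E S" using qo s(1) unfolding ipaths_def by blast
          then have "length qs - 1 \<le> m" using mval_ge m_def by simp
          then show ?thesis using 2(1) psq False by (cases qs) auto
        qed
      qed
    qed
  qed
  then show "mval k (Suc t) ?E' (insert (k+t) T) \<le> Suc (mval k t E S)"
    unfolding mval_def m_def using ipaths_fin by (subst Max_le_iff) auto
next
  let ?E' = "ext k t E S"
  have vk: "v < k + t" using v Ssub by auto
  from mval_in[OF v vk, of E] obtain qs where qs: "mval k t E S = length qs - 1" "increasing_path k t E qs" "last qs \<in> S"
    unfolding ipaths_def by blast
  have ne: "qs \<noteq> []" using qs(2) by (simp add: increasing_path_def)
  have sq: "set qs \<subseteq> {0..<k+t}" using qs(2) by (simp add: increasing_path_def)
  have lq: "last qs < k + t" using qs(3) Ssub by auto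
  have "{last qs, k+t} = {k+t, last qs}" by (rule insert_commute)
  then have e: "{last qs, k+t} \<in> ?E'" using qs(3) unfolding ext_def by blast
  have nin: "k + t \<notin> set qs" using sq by auto
  have b: "birth k (last qs) < birth k (k + t)" using birth_le[OF lq] birth_new[of k t] by simp
  have "increasing_path k (Suc t) ?E' (qs @ [k+t])"
    using path_snoc[OF ne, of k "Suc t" ?E' "k+t"] path_old_new[OF qs(2)] nin e b by simp
  then have "length (qs @ [k+t]) - 1 \<in> ipaths k (Suc t) ?E' (insert (k+t) T)"
    unfolding ipaths_def by (intro CollectI exI[of _ "qs @ [k+t]"]) simp
  then have "length (qs @ [k+t]) - 1 \<le> mval k (Suc t) ?E' (insert (k+t) T)" by (rule mval_ge)
  then show "Suc (mval k t E S) \<le> mval k (Suc t) ?E' (insert (k+t) T)" using qs(1) ne by (cases qs) auto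
qed

definition Inv :: "nat \<Rightarrow> nat \<Rightarrow> nat set set \<Rightarrow> bool" where
  "Inv k t E \<longleftrightarrow> edges_ok k t E \<and> card (kcliques k {0..<k+t} E) = 1 + k * t \<and>
     (\<forall>v<k+t. \<exists>S\<in>kcliques k {0..<k+t} E. v \<in> S)"

lemma kcliques_fin: "finite V \<Longrightarrow> finite (kcliques k V E)"
  by (rule finite_subset[of _ "Pow V"]) (auto simp: kcliques_def)

lemma kcliques_D: "S \<in> kcliques k V E \<Longrightarrow> S \<subseteq> V \<and> card S = k"
  by (simp add: kcliques_def)

lemma init_cliques: "kcliques k {0..<k} (init_edges k) = {{0..<k}}"
proof (intro equalityI subsetI)
  fix S assume "S \<in> kcliques k {0..<k} (init_edges k)"
  then have "S \<subseteq> {0..<k}" "card S = k" by (auto simp: kcliques_def)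
  then have "S = {0..<k}" by (intro card_subset_eq) auto
  then show "S \<in> {{0..<k}}" by simp
next
  fix S assume "S \<in> {{0..<k}}"
  then have S: "S = {0..<k}" by simp
  have "\<And>x y. x \<in> S \<Longrightarrow> y \<in> S \<Longrightarrow> x \<noteq> y \<Longrightarrow> {x, y} \<in> init_edges k"
  proof -
    fix x y assume "x \<in> S" "y \<in> S" "x \<noteq> y"
    then have "x < k" "y < k" "x \<noteq> y" using S by auto
    then show "{x, y} \<in> init_edges k" unfolding init_edges_def by blast
  qed
  then show "S \<in> kcliques k {0..<k} (init_edges k)"
    unfolding kcliques_def using S by auto
qed

lemma Inv_init: "Inv k 0 (init_edges k)"
proof -
  have c: "kcliques k {0..<k+0} (init_edges k) = {{0..<k}}" using init_cliques by simp
  have e: "edges_ok k 0 (init_edges k)" unfolding edges_ok_def init_edges_def by auto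
  show ?thesis unfolding Inv_def c using e by auto
qed

lemma card_new:
  assumes "S \<in> kcliques k {0..<k+t} E" "k \<ge> 1"
  shows "card (insert (k+t) ` {T. T \<subseteq> S \<and> card T = k - 1}) = k"
proof -
  have S: "S \<subseteq> {0..<k+t}" "card S = k" using assms kcliques_D by blast+
  have fS: "finite S" using S(1) finite_subset by auto
  have "inj_on (insert (k+t)) {T. T \<subseteq> S \<and> card T = k - 1}"
  proof (rule inj_onI)
    fix A B assume A: "A \<in> {T. T \<subseteq> S \<and> card T = k - 1}" and B: "B \<in> {T. T \<subseteq> S \<and> card T = k - 1}"
      and eq: "insert (k+t) A = insert (k+t) B"
    have "k + t \<notin> A" "k + t \<notin> B" using A B S(1) by fastforce+
    then show "A = B" using eq by (metis insert_ident)
  qed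
  then have "card (insert (k+t) ` {T. T \<subseteq> S \<and> card T = k - 1}) = card {T. T \<subseteq> S \<and> card T = k - 1}"
    by (rule card_image)
  also have "\<dots> = k choose (k - 1)" using n_subsets[OF fS, of "k-1"] S(2) by simp
  also have "\<dots> = k" using assms(2) by (metis binomial_symmetric choose_one diff_diff_cancel diff_le_self)
  finally show ?thesis .
qed

lemma Inv_step:
  assumes k: "k \<ge> 2" and I: "Inv k t E" and S: "S \<in> kcliques k {0..<k+t} E"
  shows "Inv k (Suc t) (ext k t E S)"
proof -
  have ok: "edges_ok k t E" and cd: "card (kcliques k {0..<k+t} E) = 1 + k * t"
    and cov: "\<forall>v<k+t. \<exists>S\<in>kcliques k {0..<k+t} E. v \<in> S" using I by (auto simp: Inv_def)
  have Ss: "S \<subseteq> {0..<k+t}" "card S = k" using S kcliques_D by blast+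
  have eq: "kcliques k {0..<k + Suc t} (ext k t E S) =
     kcliques k {0..<k+t} E \<union> insert (k+t) ` {T. T \<subseteq> S \<and> card T = k - 1}"
    using cliques_ext[OF S ok] k by simp
  have ok': "edges_ok k (Suc t) (ext k t E S)"
    unfolding edges_ok_def
  proof
    fix e assume "e \<in> ext k t E S"
    then consider "e \<in> E" | s where "s \<in> S" "e = {k+t, s}" unfolding ext_def by blast
    then show "\<exists>x y. e = {x, y} \<and> x < k + Suc t \<and> y < k + Suc t \<and> x \<noteq> y"
    proof cases
      case 1
      then obtain x y where "e = {x,y}" "x < k+t" "y < k+t" "x \<noteq> y" using ok unfolding edges_ok_def by blast
      then show ?thesis by (intro exI[of _ x] exI[of _ y]) simp
    next
      case (2 s)
      then have "s < k + t" using Ss(1) by auto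
      then show ?thesis using 2 by (intro exI[of _ "k+t"] exI[of _ s]) simp
    qed
  qed
  have disj: "kcliques k {0..<k+t} E \<inter> insert (k+t) ` {T. T \<subseteq> S \<and> card T = k - 1} = {}"
    using kcliques_D by fastforce
  have fin1: "finite (kcliques k {0..<k+t} E)" by (simp add: kcliques_fin)
  have fin2: "finite (insert (k+t) ` {T. T \<subseteq> S \<and> card T = k - 1})"
    using card_new[OF S] k by (intro card_ge_0_finite) simp
  have card': "card (kcliques k {0..<k + Suc t} (ext k t E S)) = 1 + k * Suc t"
    unfolding eq using card_Un_disjoint[OF fin1 fin2 disj] cd card_new[OF S] k by simp
  have cov': "\<forall>v<k + Suc t. \<exists>S'\<in>kcliques k {0..<k + Suc t} (ext k t E S). v \<in> S'"
  proof (intro allI impI)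
    fix v assume v: "v < k + Suc t"
    show "\<exists>S'\<in>kcliques k {0..<k + Suc t} (ext k t E S). v \<in> S'"
    proof (cases "v < k + t")
      case True then show ?thesis using cov unfolding eq by blast
    next
      case False
      then have vv: "v = k + t" using v by simp
      have fS: "finite S" using Ss(1) finite_subset by auto
      obtain T where T: "T \<subseteq> S" "card T = k - 1"
        using obtain_subset_with_card_n[of "k-1" S] Ss(2) by auto
      then have "insert (k+t) T \<in> kcliques k {0..<k + Suc t} (ext k t E S)" unfolding eq by blast
      then show ?thesis using vv by blast
    qed
  qed
  show ?thesis unfolding Inv_def using ok' card' cov' by blast
qed

lemma support_Inv:
  assumes "k \<ge> 2"
  shows "E \<in> set_pmf (ktree k t) \<Longrightarrow> Inv k t E"
proof (induction t arbitrary: E)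
  case 0 then show ?case by (simp add: Inv_init)
next
  case (Suc t)
  from Suc.prems obtain E0 where E0: "E0 \<in> set_pmf (ktree k t)"
    and E: "E \<in> set_pmf (map_pmf (\<lambda>S. E0 \<union> {{k + t, s} | s. s \<in> S}) (pmf_of_set (kcliques k {0..<k + t} E0)))"
    by auto
  have I: "Inv k t E0" using Suc.IH E0 by blast
  then have cd: "card (kcliques k {0..<k+t} E0) = 1 + k * t" by (simp add: Inv_def)
  have fin: "finite (kcliques k {0..<k+t} E0)" by (simp add: kcliques_fin)
  have ne: "kcliques k {0..<k+t} E0 \<noteq> {}" using cd by auto
  from E obtain S where S: "S \<in> kcliques k {0..<k+t} E0" "E = ext k t E0 S"
    using set_pmf_of_set[OF ne fin] by (auto simp: ext_def)
  show ?case using Inv_step[OF assms I S(1)] S(2) by simp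
qed

definition Phi :: "nat \<Rightarrow> nat \<Rightarrow> nat set set \<Rightarrow> real" where
  "Phi k t E = (\<Sum>S\<in>kcliques k {0..<k+t} E. exp 1 ^ mval k t E S)"

lemma Phi_step:
  assumes k: "k \<ge> 2" and I: "Inv k t E" and S: "S \<in> kcliques k {0..<k+t} E"
  shows "Phi k (Suc t) (ext k t E S) = Phi k t E + real k * exp 1 ^ Suc (mval k t E S)"
proof -
  have ok: "edges_ok k t E" using I by (simp add: Inv_def)
  have Ss: "S \<subseteq> {0..<k+t}" "card S = k" using S kcliques_D by blast+
  obtain v where v: "v \<in> S" using Ss k by (metis all_not_in_conv card.empty not_numeral_le_zero)
  let ?N = "insert (k+t) ` {T. T \<subseteq> S \<and> card T = k - 1}"
  have eq: "kcliques k {0..<k + Suc t} (ext k t E S) = kcliques k {0..<k+t} E \<union> ?N"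
    using cliques_ext[OF S ok] k by simp
  have disj: "kcliques k {0..<k+t} E \<inter> ?N = {}"
    using kcliques_D by fastforce
  have fin1: "finite (kcliques k {0..<k+t} E)" by (simp add: kcliques_fin)
  have fin2: "finite ?N"
    using card_new[OF S] k by (intro card_ge_0_finite) simp
  have "Phi k (Suc t) (ext k t E S) = (\<Sum>S'\<in>kcliques k {0..<k+t} E. exp 1 ^ mval k (Suc t) (ext k t E S) S')
      + (\<Sum>S'\<in>?N. exp 1 ^ mval k (Suc t) (ext k t E S) S')"
    unfolding Phi_def eq by (rule sum.union_disjoint[OF fin1 fin2 disj])
  also have "(\<Sum>S'\<in>kcliques k {0..<k+t} E. exp 1 ^ mval k (Suc t) (ext k t E S) S') = Phi k t E"
    unfolding Phi_def by (intro sum.cong refl) (simp add: mval_old kcliques_D)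
  also have "(\<Sum>S'\<in>?N. exp 1 ^ mval k (Suc t) (ext k t E S) S') = (\<Sum>S'\<in>?N. exp 1 ^ Suc (mval k t E S))"
  proof (intro sum.cong refl)
    fix S' assume "S' \<in> ?N"
    then obtain T where "T \<subseteq> S" "S' = insert (k+t) T" by blast
    then show "exp 1 ^ mval k (Suc t) (ext k t E S) S' = exp 1 ^ Suc (mval k t E S)"
      using mval_new[OF ok Ss(1) v] by simp
  qed
  also have "\<dots> = real k * exp 1 ^ Suc (mval k t E S)" using card_new[OF S] k by simp
  finally show ?thesis .
qed

lemma Phi_nonneg: "0 \<le> Phi k t E"
  unfolding Phi_def by (intro sum_nonneg) simp

lemma inner_step:
  assumes k: "k \<ge> 2" and I: "Inv k t E"
  shows "(\<integral>\<^sup>+S. ennreal (Phi k (Suc t) (E \<union> {{k + t, s} | s. s \<in> S})) \<partial>pmf_of_set (kcliques k {0..<k+t} E))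
     = ennreal ((1 + real k * exp 1 / (1 + real k * real t)) * Phi k t E)"
proof -
  let ?C = "kcliques k {0..<k+t} E"
  have cd: "card ?C = 1 + k * t" using I by (simp add: Inv_def)
  have fin: "finite ?C" by (simp add: kcliques_fin)
  have ne: "?C \<noteq> {}" using cd by auto
  have sumeq: "(\<Sum>S\<in>?C. Phi k (Suc t) (E \<union> {{k + t, s} | s. s \<in> S}))
      = real (card ?C) * Phi k t E + real k * exp 1 * Phi k t E"
  proof -
    have "(\<Sum>S\<in>?C. Phi k (Suc t) (E \<union> {{k + t, s} | s. s \<in> S}))
        = (\<Sum>S\<in>?C. Phi k t E + real k * exp 1 ^ Suc (mval k t E S))"
      using Phi_step[OF k I] by (intro sum.cong refl) (simp add: ext_def)
    also have "\<dots> = real (card ?C) * Phi k t E + real k * exp 1 * (\<Sum>S\<in>?C. exp 1 ^ mval k t E S)"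
      by (simp add: sum.distrib sum_distrib_left mult.assoc)
    finally show ?thesis by (simp add: Phi_def)
  qed
  have "(\<integral>\<^sup>+S. ennreal (Phi k (Suc t) (E \<union> {{k + t, s} | s. s \<in> S})) \<partial>pmf_of_set ?C)
      = (\<Sum>S\<in>?C. ennreal (Phi k (Suc t) (E \<union> {{k + t, s} | s. s \<in> S}))) / of_nat (card ?C)"
    by (rule nn_integral_pmf_of_set[OF ne fin])
  also have "\<dots> = ennreal (\<Sum>S\<in>?C. Phi k (Suc t) (E \<union> {{k + t, s} | s. s \<in> S})) / ennreal (real (card ?C))"
    by (simp add: Phi_nonneg ennreal_of_nat_eq_real_of_nat)
  also have "\<dots> = ennreal ((\<Sum>S\<in>?C. Phi k (Suc t) (E \<union> {{k + t, s} | s. s \<in> S})) / real (card ?C))"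
    by (intro divide_ennreal sum_nonneg Phi_nonneg) (simp_all add: cd add_pos_nonneg)
  also have "(\<Sum>S\<in>?C. Phi k (Suc t) (E \<union> {{k + t, s} | s. s \<in> S})) / real (card ?C)
      = (1 + real k * exp 1 / (1 + real k * real t)) * Phi k t E"
  proof -
    have d: "1 + real k * real t \<noteq> 0" by (metis add_pos_nonneg less_numeral_extra(1) of_nat_0_le_iff mult_nonneg_nonneg not_less_iff_gr_or_eq)
    show ?thesis unfolding sumeq cd using d by (simp add: field_simps)
  qed
  finally show ?thesis .
qed

definition Pn :: "nat \<Rightarrow> nat \<Rightarrow> real" where
  "Pn k n = (\<Prod>i<n. 1 + real k * exp 1 / (1 + real k * real i))"

lemma Pn_nonneg: "0 \<le> Pn k n"
  unfolding Pn_def by (intro prod_nonneg) (simp add: add_nonneg_nonneg)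

lemma expect_Phi:
  assumes k: "k \<ge> 2"
  shows "(\<integral>\<^sup>+E. ennreal (Phi k t E) \<partial>ktree k t) = ennreal (Pn k t)"
proof (induction t)
  case 0
  have "Phi k 0 (init_edges k) = 1"
  proof -
    have c: "kcliques k {0..<k+0} (init_edges k) = {{0..<k}}" using init_cliques by simp
    have "mval k 0 (init_edges k) {0..<k} = 0"
    proof -
      have "ipaths k 0 (init_edges k) {0..<k} \<subseteq> {0}"
      proof
        fix x assume "x \<in> ipaths k 0 (init_edges k) {0..<k}"
        then obtain ps where ps: "x = length ps - 1" "increasing_path k 0 (init_edges k) ps" unfolding ipaths_def by blast
        show "x \<in> {0}"
        proof (rule ccontr)
          assume "x \<notin> {0}"
          then have "Suc 0 < length ps" using ps(1) by simp
          then have "birth k (ps ! 0) < birth k (ps ! 1)" using ps(2) unfolding increasing_path_def by auto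
          moreover have "ps ! 1 < k + 0" using ps(2) \<open>Suc 0 < length ps\<close> unfolding increasing_path_def
            by (metis atLeastLessThan_iff nth_mem subsetD One_nat_def)
          ultimately show False using birth_le[of "ps ! 1" k 0] by simp
        qed
      qed
      then show ?thesis unfolding mval_def
        by (metis Max_singleton insert_absorb2 subset_singleton_iff insert_not_empty)
    qed
    then show ?thesis unfolding Phi_def c by simp
  qed
  then show ?case by (simp add: Pn_def)
next
  case (Suc t)
  have "(\<integral>\<^sup>+E. ennreal (Phi k (Suc t) E) \<partial>ktree k (Suc t))
      = (\<integral>\<^sup>+E. (\<integral>\<^sup>+S. ennreal (Phi k (Suc t) (E \<union> {{k + t, s} | s. s \<in> S})) \<partial>pmf_of_set (kcliques k {0..<k+t} E)) \<partial>ktree k t)"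
    by simp
  also have "\<dots> = (\<integral>\<^sup>+E. ennreal (1 + real k * exp 1 / (1 + real k * real t)) * ennreal (Phi k t E) \<partial>ktree k t)"
  proof (rule nn_integral_cong_AE)
    show "AE E in measure_pmf (ktree k t). (\<integral>\<^sup>+S. ennreal (Phi k (Suc t) (E \<union> {{k + t, s} | s. s \<in> S})) \<partial>pmf_of_set (kcliques k {0..<k+t} E))
       = ennreal (1 + real k * exp 1 / (1 + real k * real t)) * ennreal (Phi k t E)"
      unfolding AE_measure_pmf_iff
    proof
      fix E assume "E \<in> set_pmf (ktree k t)"
      then have I: "Inv k t E" using support_Inv[OF k] by blast
      show "(\<integral>\<^sup>+S. ennreal (Phi k (Suc t) (E \<union> {{k + t, s} | s. s \<in> S})) \<partial>pmf_of_set (kcliques k {0..<k+t} E))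
       = ennreal (1 + real k * exp 1 / (1 + real k * real t)) * ennreal (Phi k t E)"
        unfolding inner_step[OF k I] by (rule ennreal_mult) (simp_all add: Phi_nonneg)
    qed
  qed
  also have "\<dots> = ennreal (1 + real k * exp 1 / (1 + real k * real t)) * (\<integral>\<^sup>+E. ennreal (Phi k t E) \<partial>ktree k t)"
    by (rule nn_integral_cmult) simp
  also have "\<dots> = ennreal ((1 + real k * exp 1 / (1 + real k * real t)) * Pn k t)"
    unfolding Suc.IH by (rule ennreal_mult[symmetric]) (simp_all add: Pn_nonneg add_nonneg_nonneg)
  also have "(1 + real k * exp 1 / (1 + real k * real t)) * Pn k t = Pn k (Suc t)"
    by (simp add: Pn_def mult.commute)
  finally show ?case .
qed

lemma sum_bound: "(\<Sum>i<Suc n. real k / (1 + real k * real i)) \<le> real k + harm n"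
proof (induction n)
  case 0 then show ?case by (simp add: harm_def)
next
  case (Suc n)
  have "real k / (1 + real k * real (Suc n)) \<le> inverse (of_nat (Suc n))"
  proof -
    have p: "0 < 1 + real k * real (Suc n)" by (simp add: add_pos_nonneg)
    have "real k * real (Suc n) \<le> 1 + real k * real (Suc n)" by simp
    then show ?thesis using p by (simp add: field_simps)
  qed
  then show ?case using Suc.IH by (simp add: harm_Suc)
qed

lemma harm_ln: "m \<ge> 1 \<Longrightarrow> harm m \<le> 1 + ln (real m)"
  using euler_mascheroni_sequence_decreasing[of 1 m] by (simp add: harm_def)

lemma Pn_bound:
  assumes n: "n \<ge> 2"
  shows "Pn k n \<le> exp (exp 1 * (real k + 1)) * real n ^ 3"
proof -
  define a where "a i = exp 1 * (real k / (1 + real k * real i))" for i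
  have a0: "0 \<le> a i" for i unfolding a_def by (simp add: add_nonneg_nonneg)
  have "Pn k n = (\<Prod>i<n. 1 + a i)" unfolding Pn_def a_def by (simp add: mult.commute)
  also have "\<dots> \<le> (\<Prod>i<n. exp (a i))"
    by (intro prod_mono) (simp add: a0 add_nonneg_nonneg)
  also have "\<dots> = exp (\<Sum>i<n. a i)" by (simp add: exp_sum)
  also have "(\<Sum>i<n. a i) \<le> exp 1 * (real k + 1) + 3 * ln (real n)"
  proof -
    obtain m where m: "n = Suc m" "m \<ge> 1" using n by (cases n) auto
    have "(\<Sum>i<n. a i) = exp 1 * (\<Sum>i<Suc m. real k / (1 + real k * real i))"
      unfolding a_def m(1) by (rule sum_distrib_left[symmetric])
    also have "\<dots> \<le> exp 1 * (real k + 1 + ln (real m))"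
      using sum_bound[where n=m and k=k] harm_ln[OF m(2)] by (intro mult_left_mono) auto
    also have "\<dots> \<le> exp 1 * (real k + 1 + ln (real n))"
      using m by (intro mult_left_mono add_left_mono) auto
    also have "\<dots> = exp 1 * (real k + 1) + exp 1 * ln (real n)" by (simp add: algebra_simps)
    also have "exp 1 * ln (real n) \<le> 3 * ln (real n)"
      using n exp_le by (intro mult_right_mono) auto
    finally show ?thesis by simp
  qed
  then have "exp (\<Sum>i<n. a i) \<le> exp (exp 1 * (real k + 1) + 3 * ln (real n))" by simp
  also have "\<dots> = exp (exp 1 * (real k + 1)) * real n ^ 3"
  proof -
    have "exp (3 * ln (real n)) = exp (ln (real n)) ^ 3" using exp_of_nat_mult[of 3 "ln (real n)"] by simp
    also have "\<dots> = real n ^ 3" using n by simp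
    finally show ?thesis by (simp add: exp_add)
  qed
  finally show ?thesis .
qed

lemma good_bound:
  assumes k: "k \<ge> 2" and n: "n \<ge> 2"
  shows "1 - exp (exp 1 * (real k + 1)) / real n \<le> measure_pmf.prob (ktree k n)
        {E. \<forall>ps. increasing_path k n E ps \<longrightarrow> real (length ps - 1) \<le> 4 * ln (real n)}"
proof -
  let ?M = "measure_pmf (ktree k n)"
  let ?G = "{E. \<forall>ps. increasing_path k n E ps \<longrightarrow> real (length ps - 1) \<le> 4 * ln (real n)}"
  let ?B = "{x \<in> space ?M. real n ^ 4 \<le> Phi k n x}"
  have meas: "Phi k n \<in> borel_measurable ?M" by simp
  have ii: "integrable ?M (Phi k n) \<and> integral\<^sup>L ?M (Phi k n) = Pn k n"
  proof -
    have e: "(\<integral>\<^sup>+x. ennreal (Phi k n x) \<partial>?M) = ennreal (Pn k n)" by (rule expect_Phi[OF k])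
    have ae: "AE x in ?M. 0 \<le> Phi k n x" by (simp add: Phi_nonneg)
    show ?thesis using nn_integral_eq_integrable[OF meas ae Pn_nonneg[of k n]] e by simp
  qed
  have npos: "0 < real n" using n by simp
  have markov: "measure ?M ?B \<le> Pn k n / real n ^ 4"
    using integral_Markov_inequality_measure[of ?M "Phi k n" UNIV "real n ^ 4"] ii npos Phi_nonneg
    by simp
  have sub: "(UNIV - ?G) \<inter> set_pmf (ktree k n) \<subseteq> ?B"
  proof
    fix E assume E: "E \<in> (UNIV - ?G) \<inter> set_pmf (ktree k n)"
    then have I: "Inv k n E" using support_Inv[OF k] by blast
    from E obtain ps where ps: "increasing_path k n E ps" "\<not> real (length ps - 1) \<le> 4 * ln (real n)" by auto
    define h where "h = length ps - 1"
    have ne: "ps \<noteq> []" using ps(1) by (simp add: increasing_path_def)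
    have "last ps \<in> set ps" using ne by simp
    then have "last ps \<in> {0..<k+n}" using ps(1) unfolding increasing_path_def by blast
    then obtain S where S: "S \<in> kcliques k {0..<k+n} E" "last ps \<in> S" using I unfolding Inv_def by auto
    have "h \<in> ipaths k n E S" unfolding ipaths_def h_def using ps(1) S(2) by blast
    then have hm: "h \<le> mval k n E S" by (rule mval_ge)
    have "exp 1 ^ mval k n E S \<le> Phi k n E"
      unfolding Phi_def using S(1) by (intro member_le_sum) (simp_all add: kcliques_fin)
    moreover have "(exp 1::real) ^ h \<le> exp 1 ^ mval k n E S" by (rule power_increasing[OF hm]) simp
    moreover have "(exp 1::real) ^ h = exp (real h)" using exp_of_nat_mult[of h "1::real"] by simp
    moreover have "exp (4 * ln (real n)) \<le> exp (real h)" using ps(2) h_def by simp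
    moreover have "exp (4 * ln (real n)) = real n ^ 4"
      using exp_of_nat_mult[of 4 "ln (real n)"] npos by simp
    ultimately have "real n ^ 4 \<le> Phi k n E" by linarith
    then show "E \<in> ?B" by simp
  qed
  have "measure ?M (UNIV - ?G) = measure ?M ((UNIV - ?G) \<inter> set_pmf (ktree k n))"
    by (simp add: measure_Int_set_pmf)
  also have "\<dots> \<le> measure ?M ?B" using sub by (intro measure_pmf.finite_measure_mono) auto
  also have "\<dots> \<le> Pn k n / real n ^ 4" by (rule markov)
  also have "\<dots> \<le> exp (exp 1 * (real k + 1)) * real n ^ 3 / real n ^ 4"
    using Pn_bound[OF n, of k] npos by (intro divide_right_mono) auto
  also have "\<dots> = exp (exp 1 * (real k + 1)) / real n"
    using npos by (simp add: field_simps power_numeral_reduce)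
  finally have b: "measure ?M (UNIV - ?G) \<le> exp (exp 1 * (real k + 1)) / real n" .
  have "measure ?M (UNIV - ?G) = 1 - measure ?M ?G"
    using measure_pmf.prob_compl[of ?G "ktree k n"] by simp
  then show ?thesis using b by simp
qed

theorem proposition5:
  fixes k :: nat
  assumes "k \<ge> 2"
  shows "\<exists>C::real. C > 0 \<and>
    (\<lambda>n. measure_pmf.prob (ktree k n)
        {E. \<forall>ps. increasing_path k n E ps \<longrightarrow> real (length ps - 1) \<le> C * ln (real n)})
    \<longlonglongrightarrow> 1"
proof (intro exI conjI)
  show "(4::real) > 0" by simp
  let ?A = "exp (exp 1 * (real k + 1))"
  have l: "(\<lambda>n. 1 - ?A / real n) \<longlonglongrightarrow> 1"
    using tendsto_diff[OF tendsto_const lim_const_over_n[of ?A]] by simp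
  show "(\<lambda>n. measure_pmf.prob (ktree k n)
        {E. \<forall>ps. increasing_path k n E ps \<longrightarrow> real (length ps - 1) \<le> 4 * ln (real n)}) \<longlonglongrightarrow> 1"
  proof (rule tendsto_sandwich[OF _ _ l tendsto_const])
    show "eventually (\<lambda>n. 1 - ?A / real n \<le> measure_pmf.prob (ktree k n)
        {E. \<forall>ps. increasing_path k n E ps \<longrightarrow> real (length ps - 1) \<le> 4 * ln (real n)}) sequentially"
      by (rule eventually_mono[OF eventually_ge_at_top[of "2::nat"]]) (rule good_bound[OF assms])
    show "eventually (\<lambda>n. measure_pmf.prob (ktree k n)
        {E. \<forall>ps. increasing_path k n E ps \<longrightarrow> real (length ps - 1) \<le> 4 * ln (real n)} \<le> 1) sequentially"
      by simp
  qed
qed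

end
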